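(* Let $\mathbf{k}$ be a field, $p\ge3$ and $q\ge1$ integers, $S=\mathbf{k}[e_1,\dots,e_{qp}]$ with the graded reverse lexicographic order with $e_1>e_2>\cdots>e_{qp}$. Let $A'$ be the $(2q-1)\times((q-1)+(p-1)q)$ matrix with entries $A'_{i,j}=e_{pi+j-qp}$, where $e_0=1$ and $e_k=0$ for $k<0$ or $k>qp$. Then for every $(2q-1)\times(2q-1)$ submatrix $B$ of $A'$ with $\det B\neq 0$, the leading term of $\det B$ is the antidiagonal term $\operatorname{sgn}(w_0)\prod_{i=1}^{2q-1}B_{i,2q-i}$, where $w_0$ is the permutation $i\mapsto 2q-i$. *)

theory Defs
  imports "Jordan_Normal_Form.Determinant" "Jordan_Normal_Form.DL_Submatrix" "HOL-Library.Poly_Mapping"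
begin

text \<open>The ring
  S = k[e_1,...,e_qp] is the subring generated by the variables 1..qp.\<close>

type_synonym 'k mpoly = "(nat \<Rightarrow>\<^sub>0 nat) \<Rightarrow>\<^sub>0 'k"

definition mvar :: "nat \<Rightarrow> 'k::zero_neq_one mpoly" where
  "mvar k = Poly_Mapping.single (Poly_Mapping.single k 1) 1"

definition evar :: "nat \<Rightarrow> int \<Rightarrow> 'k::{zero_neq_one, semiring_1} mpoly" where
  "evar n k = (if k = 0 then 1 else if k < 0 \<or> k > int n then 0 else mvar (nat k))"

definition total_degree :: "(nat \<Rightarrow>\<^sub>0 nat) \<Rightarrow> nat" where
  "total_degree a = (\<Sum>i\<in>Poly_Mapping.keys a. Poly_Mapping.lookup a i)"

definition grevlex_less :: "(nat \<Rightarrow>\<^sub>0 nat) \<Rightarrow> (nat \<Rightarrow>\<^sub>0 nat) \<Rightarrow> bool" where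
  "grevlex_less a b \<longleftrightarrow> total_degree a < total_degree b \<or>
     (total_degree a = total_degree b \<and> a \<noteq> b \<and>
      (let k = Max {i. Poly_Mapping.lookup a i \<noteq> Poly_Mapping.lookup b i} in Poly_Mapping.lookup b k < Poly_Mapping.lookup a k))"

definition leading_monomial :: "'k::zero mpoly \<Rightarrow> (nat \<Rightarrow>\<^sub>0 nat)" where
  "leading_monomial f = (THE m. m \<in> Poly_Mapping.keys f \<and> (\<forall>m'\<in>Poly_Mapping.keys f. m' \<noteq> m \<longrightarrow> grevlex_less m' m))"

definition leading_term :: "'k::zero mpoly \<Rightarrow> 'k mpoly" where
  "leading_term f = Poly_Mapping.single (leading_monomial f) (Poly_Mapping.lookup f (leading_monomial f))"

text \<open>The matrix A' (0-based indices: entry (i,j) is A'_{i+1,j+1} = e_{p(i+1)+(j+1)-qp}).\<close>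
definition Aprime :: "nat \<Rightarrow> nat \<Rightarrow> 'k::field mpoly mat" where
  "Aprime p q = mat (2*q - 1) ((q - 1) + (p - 1) * q)
     (\<lambda>(i, j). evar (q*p) (int p * int (i+1) + int (j+1) - int q * int p))"

text \<open>The longest permutation w_0 : i \<mapsto> 2q - i on {1..2q-1}, in 0-based form i \<mapsto> 2q-2-i on {0..<2q-1}.\<close>
definition w0 :: "nat \<Rightarrow> nat \<Rightarrow> nat" where
  "w0 q = (\<lambda>i. if i < 2*q - 1 then 2*q - 2 - i else i)"

end

theory Submission
  imports Defs
begin

lemma finite_diffset: "finite {i. Poly_Mapping.lookup (a::nat \<Rightarrow>\<^sub>0 nat) i \<noteq> Poly_Mapping.lookup b i}"
proof -
  have "{i. Poly_Mapping.lookup a i \<noteq> Poly_Mapping.lookup b i} \<subseteq> Poly_Mapping.keys a \<union> Poly_Mapping.keys b"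
    by (auto simp: in_keys_iff)
  then show ?thesis by (rule finite_subset) simp
qed

lemma gl_char:
  "grevlex_less a b \<longleftrightarrow> total_degree a < total_degree b \<or>
     (total_degree a = total_degree b \<and> (\<exists>k. Poly_Mapping.lookup b k < Poly_Mapping.lookup a k \<and>
        (\<forall>i>k. Poly_Mapping.lookup a i = Poly_Mapping.lookup b i)))"
proof -
  let ?D = "{i. Poly_Mapping.lookup a i \<noteq> Poly_Mapping.lookup b i}"
  have fin: "finite ?D" by (rule finite_diffset)
  have A: "(a \<noteq> b \<and> Poly_Mapping.lookup b (Max ?D) < Poly_Mapping.lookup a (Max ?D)) \<longleftrightarrow>
     (\<exists>k. Poly_Mapping.lookup b k < Poly_Mapping.lookup a k \<and>
        (\<forall>i>k. Poly_Mapping.lookup a i = Poly_Mapping.lookup b i))"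
  proof
    assume h: "a \<noteq> b \<and> Poly_Mapping.lookup b (Max ?D) < Poly_Mapping.lookup a (Max ?D)"
    show "\<exists>k. Poly_Mapping.lookup b k < Poly_Mapping.lookup a k \<and>
        (\<forall>i>k. Poly_Mapping.lookup a i = Poly_Mapping.lookup b i)"
    proof (intro exI conjI allI impI)
      show "Poly_Mapping.lookup b (Max ?D) < Poly_Mapping.lookup a (Max ?D)" using h by simp
      fix i assume "Max ?D < i"
      show "Poly_Mapping.lookup a i = Poly_Mapping.lookup b i"
      proof (rule ccontr)
        assume "Poly_Mapping.lookup a i \<noteq> Poly_Mapping.lookup b i"
        then have "i \<in> ?D" by simp
        from Max_ge[OF fin this] \<open>Max ?D < i\<close> show False by simp
      qed
    qed
  next
    assume "\<exists>k. Poly_Mapping.lookup b k < Poly_Mapping.lookup a k \<and>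
        (\<forall>i>k. Poly_Mapping.lookup a i = Poly_Mapping.lookup b i)"
    then obtain k where k: "Poly_Mapping.lookup b k < Poly_Mapping.lookup a k"
      "\<forall>i>k. Poly_Mapping.lookup a i = Poly_Mapping.lookup b i" by blast
    have "Max ?D = k"
    proof (rule Max_eqI[OF fin])
      show "k \<in> ?D" using k(1) by simp
      fix y assume y: "y \<in> ?D"
      show "y \<le> k"
      proof (rule ccontr)
        assume "\<not> y \<le> k"
        then have "k < y" by simp
        with k(2) have "Poly_Mapping.lookup a y = Poly_Mapping.lookup b y" by blast
        with y show False by simp
      qed
    qed
    moreover have "a \<noteq> b" using k(1) by auto
    ultimately show "a \<noteq> b \<and> Poly_Mapping.lookup b (Max ?D) < Poly_Mapping.lookup a (Max ?D)"
      using k by simp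
  qed
  have "grevlex_less a b \<longleftrightarrow> total_degree a < total_degree b \<or>
     (total_degree a = total_degree b \<and> (a \<noteq> b \<and> Poly_Mapping.lookup b (Max ?D) < Poly_Mapping.lookup a (Max ?D)))"
    unfolding grevlex_less_def Let_def by (rule refl)
  then show ?thesis by (simp only: A)
qed

lemma gl_irrefl: "\<not> grevlex_less a a"
  by (simp add: gl_char)

lemma gl_asym: "grevlex_less a b \<Longrightarrow> \<not> grevlex_less b a"
proof
  assume 1: "grevlex_less a b" and 2: "grevlex_less b a"
  then have td: "total_degree a = total_degree b" by (auto simp: gl_char)
  from 1 td obtain k1 where k1: "Poly_Mapping.lookup b k1 < Poly_Mapping.lookup a k1"
    "\<forall>i>k1. Poly_Mapping.lookup a i = Poly_Mapping.lookup b i" by (auto simp: gl_char)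
  from 2 td obtain k2 where k2: "Poly_Mapping.lookup a k2 < Poly_Mapping.lookup b k2"
    "\<forall>i>k2. Poly_Mapping.lookup b i = Poly_Mapping.lookup a i" by (auto simp: gl_char)
  show False
  proof (cases k1 k2 rule: linorder_cases)
    case less then show ?thesis using k1 k2 by (metis less_irrefl)
  next
    case equal then show ?thesis using k1 k2 by simp
  next
    case greater then show ?thesis using k1 k2 by (metis less_irrefl)
  qed
qed

lemma gl_trans:
  assumes 1: "grevlex_less a b" and 2: "grevlex_less b c"
  shows "grevlex_less a c"
proof (cases "total_degree a < total_degree c")
  case True then show ?thesis by (simp add: gl_char)
next
  case False
  with 1 2 have td: "total_degree a = total_degree b" "total_degree b = total_degree c"
    by (auto simp: gl_char)
  from 1 td obtain k1 where k1: "Poly_Mapping.lookup b k1 < Poly_Mapping.lookup a k1"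
    "\<forall>i>k1. Poly_Mapping.lookup a i = Poly_Mapping.lookup b i" by (auto simp: gl_char)
  from 2 td obtain k2 where k2: "Poly_Mapping.lookup c k2 < Poly_Mapping.lookup b k2"
    "\<forall>i>k2. Poly_Mapping.lookup b i = Poly_Mapping.lookup c i" by (auto simp: gl_char)
  have "\<exists>k. Poly_Mapping.lookup c k < Poly_Mapping.lookup a k \<and>
        (\<forall>i>k. Poly_Mapping.lookup a i = Poly_Mapping.lookup c i)"
  proof (cases k1 k2 rule: linorder_cases)
    case less then show ?thesis using k1 k2 by (intro exI[of _ k2]) auto
  next
    case equal then show ?thesis using k1 k2 by (intro exI[of _ k2]) auto
  next
    case greater then show ?thesis using k1 k2 by (intro exI[of _ k1]) auto
  qed
  then show ?thesis using td by (simp add: gl_char)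
qed

lemma td_add: "total_degree (a + b) = total_degree a + total_degree b"
  unfolding total_degree_def
  by (rule setsum_keys_plus_distrib[where f="\<lambda>k v. v"]) (auto simp: lookup_add)

lemma td_single[simp]: "total_degree (Poly_Mapping.single k n) = n"
  unfolding total_degree_def by simp

lemma td_zero: "total_degree 0 = 0"
  unfolding total_degree_def by simp

lemma gl_add: "grevlex_less a b \<Longrightarrow> grevlex_less (r + a) (r + b)"
  by (simp add: gl_char td_add lookup_add)

lemma gl_add': "grevlex_less a b \<Longrightarrow> grevlex_less (a + r) (b + r)"
  using gl_add[of a b r] by (simp add: add.commute)

definition mon :: "int \<Rightarrow> (nat \<Rightarrow>\<^sub>0 nat)" where
  "mon x = (if x = 0 then 0 else Poly_Mapping.single (nat x) 1)"

lemma gl_swap: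
  fixes u v u' v' :: int
  assumes "0 \<le> u" "u < u'" "u < v'" "u' < v" "v' < v"
  shows "grevlex_less (mon u + mon v) (mon u' + mon v')"
proof (cases "u = 0")
  case True
  then show ?thesis using assms
    by (simp add: gl_char mon_def td_add td_single td_zero)
next
  case False
  have td: "total_degree (mon u + mon v) = total_degree (mon u' + mon v')"
    using assms False by (simp add: mon_def td_add td_single)
  have lt: "nat u < nat v" "nat u' < nat v" "nat v' < nat v" using assms by linarith+
  have neq: "nat u \<noteq> nat v" "nat u' \<noteq> nat v" "nat v' \<noteq> nat v"
    using less_imp_neq[OF lt(1)] less_imp_neq[OF lt(2)] less_imp_neq[OF lt(3)] by blast+
  have "Poly_Mapping.lookup (mon u' + mon v') (nat v) < Poly_Mapping.lookup (mon u + mon v) (nat v)"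
    using assms False neq by (simp add: mon_def lookup_add lookup_single when_def)
  moreover have "\<forall>i>nat v. Poly_Mapping.lookup (mon u + mon v) i = Poly_Mapping.lookup (mon u' + mon v') i"
    using assms False lt by (auto simp: mon_def lookup_add lookup_single when_def)
  ultimately show ?thesis using td by (auto simp: gl_char)
qed


lemma sum_two:
  fixes g :: "nat \<Rightarrow> 'a::comm_monoid_add"
  assumes "finite S" "i \<in> S" "j \<in> S" "i \<noteq> j"
  shows "sum g S = g i + g j + sum g (S - {i, j})"
proof -
  have "sum g S = g i + sum g (S - {i})" using assms by (simp add: sum.remove)
  also have "sum g (S - {i}) = g j + sum g (S - {i} - {j})"
    using assms by (intro sum.remove) auto
  also have "S - {i} - {j} = S - {i, j}" by auto
  finally show ?thesis by (simp add: add.assoc)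
qed

lemma perm_lt: "(\<sigma>::nat\<Rightarrow>nat) permutes {0..<R} \<Longrightarrow> k < R \<Longrightarrow> \<sigma> k < R"
  using permutes_in_image[of \<sigma> "{0..<R}" k] by simp

lemma exists_noninv:
  fixes \<sigma> w :: "nat \<Rightarrow> nat" and R :: nat
  assumes perm: "\<sigma> permutes {0..<R}" and ne: "\<sigma> \<noteq> w"
    and w: "\<And>i. w i = (if i < R then R - 1 - i else i)"
  shows "\<exists>i j. i < j \<and> j < R \<and> \<sigma> i < \<sigma> j"
proof (rule ccontr)
  assume H: "\<not> ?thesis"
  have inj: "inj \<sigma>" using perm by (rule permutes_inj)
  have inR: "\<And>k. k < R \<Longrightarrow> \<sigma> k < R" by (rule perm_lt[OF perm])
  have dec: "\<And>i j. i < j \<Longrightarrow> j < R \<Longrightarrow> \<sigma> j < \<sigma> i"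
  proof -
    fix i j assume "i < j" "j < R"
    with H have "\<not> \<sigma> i < \<sigma> j" by blast
    moreover have "\<sigma> i \<noteq> \<sigma> j" using inj \<open>i < j\<close> by (simp add: inj_eq)
    ultimately show "\<sigma> j < \<sigma> i" by simp
  qed
  have val: "\<sigma> i = R - 1 - i" if "i < R" for i
  proof -
    have "\<sigma> ` {i<..<R} \<subseteq> {..<\<sigma> i}" using dec by auto
    moreover have "card (\<sigma> ` {i<..<R}) = R - 1 - i"
      using card_image[OF inj_on_subset[OF inj subset_UNIV]] by simp
    ultimately have a: "R - 1 - i \<le> \<sigma> i" by (metis card_lessThan card_mono finite_lessThan)
    have "\<sigma> ` {..<i} \<subseteq> {\<sigma> i<..<R}" using dec inR that by auto
    moreover have "card (\<sigma> ` {..<i}) = i"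
      using card_image[OF inj_on_subset[OF inj subset_UNIV]] by simp
    ultimately have b: "i \<le> R - 1 - \<sigma> i"
      by (metis card_greaterThanLessThan card_mono finite_greaterThanLessThan diff_diff_left add.commute Suc_eq_plus1)
    show ?thesis using a b inR[OF that] that by linarith
  qed
  have "\<sigma> = w"
  proof
    fix k show "\<sigma> k = w k"
    proof (cases "k < R")
      case True then show ?thesis using val w by simp
    next
      case False then show ?thesis using w permutes_not_in[OF perm] by simp
    qed
  qed
  with ne show False by simp
qed

lemma nat_exch:
  fixes i j a b :: nat
  assumes "i < j" "a < b"
  shows "i * b + j * a < i * a + j * b"
proof -
  have "0 < (int j - int i) * (int b - int a)" using assms by (intro mult_pos_pos) auto
  then have "int i * int b + int j * int a < int i * int a + int j * int b"
    by (simp add: algebra_simps)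
  then have "int (i * b + j * a) < int (i * a + j * b)" by simp
  then show ?thesis by (simp only: of_nat_less_iff)
qed

lemma exchange:
  fixes x :: "nat \<Rightarrow> nat \<Rightarrow> int" and R :: nat and n :: int and w :: "nat \<Rightarrow> nat"
  assumes mono1: "\<And>i j k. i < j \<Longrightarrow> j < R \<Longrightarrow> k < R \<Longrightarrow> x i k < x j k"
    and mono2: "\<And>i k l. i < R \<Longrightarrow> k < l \<Longrightarrow> l < R \<Longrightarrow> x i k < x i l"
    and w: "\<And>i. w i = (if i < R then R - 1 - i else i)"
  shows "\<sigma> permutes {0..<R} \<Longrightarrow> (\<forall>i<R. 0 \<le> x i (\<sigma> i) \<and> x i (\<sigma> i) \<le> n) \<Longrightarrow>
    (\<forall>i<R. 0 \<le> x i (w i) \<and> x i (w i) \<le> n) \<and>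
    (\<sigma> = w \<or> grevlex_less (\<Sum>i\<in>{0..<R}. mon (x i (\<sigma> i))) (\<Sum>i\<in>{0..<R}. mon (x i (w i))))"
proof -
  have main: "\<And>\<sigma>. (\<Sum>i\<in>{0..<R}. i * \<sigma> i) = m \<Longrightarrow> \<sigma> permutes {0..<R} \<Longrightarrow>
    (\<forall>i<R. 0 \<le> x i (\<sigma> i) \<and> x i (\<sigma> i) \<le> n) \<Longrightarrow>
    (\<forall>i<R. 0 \<le> x i (w i) \<and> x i (w i) \<le> n) \<and>
    (\<sigma> = w \<or> grevlex_less (\<Sum>i\<in>{0..<R}. mon (x i (\<sigma> i))) (\<Sum>i\<in>{0..<R}. mon (x i (w i))))" for m
  proof (induction m rule: less_induct)
    case (less m \<sigma>)
    note perm = less.prems(2) and ok = less.prems(3)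
    show ?case
    proof (cases "\<sigma> = w")
      case True then show ?thesis using ok by simp
    next
      case False
      obtain i j where ij: "i < j" "j < R" "\<sigma> i < \<sigma> j"
        using exists_noninv[OF perm False w] by blast
      have inR: "\<And>k. k < R \<Longrightarrow> \<sigma> k < R" by (rule perm_lt[OF perm])
      define \<tau> where "\<tau> = \<sigma> \<circ> Transposition.transpose i j"
      have \<tau>i: "\<tau> i = \<sigma> j" and \<tau>j: "\<tau> j = \<sigma> i" by (simp_all add: \<tau>_def)
      have \<tau>k: "\<And>k. k \<noteq> i \<Longrightarrow> k \<noteq> j \<Longrightarrow> \<tau> k = \<sigma> k" by (simp add: \<tau>_def)
      have perm\<tau>: "\<tau> permutes {0..<R}" unfolding \<tau>_def
        by (rule permutes_compose[OF permutes_swap_id perm]) (use ij in auto)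
      have iR: "i < R" using ij by simp
      have xu: "x i (\<sigma> i) < x i (\<sigma> j)" using mono2[OF iR ij(3) inR[OF ij(2)]] .
      have xv': "x i (\<sigma> i) < x j (\<sigma> i)" using mono1[OF ij(1) ij(2) inR[OF iR]] .
      have xu'v: "x i (\<sigma> j) < x j (\<sigma> j)" using mono1[OF ij(1) ij(2) inR[OF ij(2)]] .
      have xv'v: "x j (\<sigma> i) < x j (\<sigma> j)" using mono2[OF ij(2) ij(3) inR[OF ij(2)]] .
      have ok\<tau>: "\<forall>k<R. 0 \<le> x k (\<tau> k) \<and> x k (\<tau> k) \<le> n"
      proof (intro allI impI)
        fix k assume k: "k < R"
        have oi: "0 \<le> x i (\<sigma> i)" "x j (\<sigma> j) \<le> n" using ok iR ij(2) by auto
        show "0 \<le> x k (\<tau> k) \<and> x k (\<tau> k) \<le> n"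
        proof (cases "k = i \<or> k = j")
          case True then show ?thesis using \<tau>i \<tau>j oi xu xv' xu'v xv'v by auto
        next
          case False then show ?thesis using \<tau>k ok k by auto
        qed
      qed
      have S: "finite {0..<R}" "i \<in> {0..<R}" "j \<in> {0..<R}" "i \<noteq> j" using ij by auto
      have rest: "\<And>g. sum (\<lambda>k. g k (\<tau> k)) ({0..<R} - {i, j}) = sum (\<lambda>k. g k (\<sigma> k)) ({0..<R} - {i, j})"
        by (rule sum.cong) (auto simp: \<tau>k)
      have meas: "(\<Sum>k\<in>{0..<R}. k * \<tau> k) < m"
      proof -
        have "(\<Sum>k\<in>{0..<R}. k * \<tau> k) = i * \<sigma> j + j * \<sigma> i + (\<Sum>k\<in>{0..<R} - {i, j}. k * \<sigma> k)"
          using sum_two[OF S, of "\<lambda>k. k * \<tau> k"] rest[of "\<lambda>k v. k * v"] \<tau>i \<tau>j by simp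
        also have "\<dots> < i * \<sigma> i + j * \<sigma> j + (\<Sum>k\<in>{0..<R} - {i, j}. k * \<sigma> k)"
          using nat_exch[OF ij(1) ij(3)] by simp
        also have "\<dots> = m"
          using sum_two[OF S, of "\<lambda>k. k * \<sigma> k"] less.prems(1) by simp
        finally show ?thesis .
      qed
      have gl: "grevlex_less (\<Sum>k\<in>{0..<R}. mon (x k (\<sigma> k))) (\<Sum>k\<in>{0..<R}. mon (x k (\<tau> k)))"
      proof -
        let ?r = "\<Sum>k\<in>{0..<R} - {i, j}. mon (x k (\<sigma> k))"
        have 1: "(\<Sum>k\<in>{0..<R}. mon (x k (\<sigma> k))) = (mon (x i (\<sigma> i)) + mon (x j (\<sigma> j))) + ?r"
          by (rule sum_two[OF S])
        have 2: "(\<Sum>k\<in>{0..<R}. mon (x k (\<tau> k))) = (mon (x i (\<sigma> j)) + mon (x j (\<sigma> i))) + ?r"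
          using sum_two[OF S, of "\<lambda>k. mon (x k (\<tau> k))"] rest[of "\<lambda>k v. mon (x k v)"] \<tau>i \<tau>j
          by simp
        have "grevlex_less (mon (x i (\<sigma> i)) + mon (x j (\<sigma> j))) (mon (x i (\<sigma> j)) + mon (x j (\<sigma> i)))"
          by (rule gl_swap) (use ok iR xu xv' xu'v xv'v in auto)
        then show ?thesis unfolding 1 2 by (rule gl_add')
      qed
      have IH: "(\<forall>i<R. 0 \<le> x i (w i) \<and> x i (w i) \<le> n) \<and>
        (\<tau> = w \<or> grevlex_less (\<Sum>i\<in>{0..<R}. mon (x i (\<tau> i))) (\<Sum>i\<in>{0..<R}. mon (x i (w i))))"
        by (rule less.IH[OF meas refl perm\<tau> ok\<tau>])
      have "grevlex_less (\<Sum>i\<in>{0..<R}. mon (x i (\<sigma> i))) (\<Sum>i\<in>{0..<R}. mon (x i (w i)))"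
      proof (cases "\<tau> = w")
        case True then show ?thesis using gl by simp
      next
        case False
        with IH have "grevlex_less (\<Sum>i\<in>{0..<R}. mon (x i (\<tau> i))) (\<Sum>i\<in>{0..<R}. mon (x i (w i)))"
          by blast
        then show ?thesis by (rule gl_trans[OF gl])
      qed
      then show ?thesis using IH by blast
    qed
  qed
  show "\<sigma> permutes {0..<R} \<Longrightarrow> (\<forall>i<R. 0 \<le> x i (\<sigma> i) \<and> x i (\<sigma> i) \<le> n) \<Longrightarrow> ?thesis"
    by (rule main[OF refl])
qed


lemma evar_eq:
  "evar n y = (if 0 \<le> y \<and> y \<le> int n then Poly_Mapping.single (mon y) 1 else (0::'k::field mpoly))"
  unfolding evar_def mvar_def mon_def by auto

lemma prod_evar:
  assumes "finite I"
  shows "(\<Prod>i\<in>I. evar n (f i) :: 'k::field mpoly) =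
    (if \<forall>i\<in>I. 0 \<le> f i \<and> f i \<le> int n then Poly_Mapping.single (\<Sum>i\<in>I. mon (f i)) 1 else 0)"
  using assms
proof (induction I rule: finite_induct)
  case empty then show ?case by simp
next
  case (insert a I)
  then show ?case by (auto simp: evar_eq mult_single)
qed

lemma w_perm: "(\<lambda>i::nat. if i < R then R - 1 - i else i) permutes {0..<R}"
  by (rule bij_imp_permutes, rule bij_betw_byWitness[where f' = "\<lambda>i::nat. if i < R then R - 1 - i else i"]) auto

theorem proposition5p5:
  fixes p q :: nat and J :: "nat set"
  assumes "p \<ge> 3" and "q \<ge> 1"
    and "J \<subseteq> {0..<(q - 1) + (p - 1) * q}" and "card J = 2*q - 1"
    and "B = submatrix (Aprime p q :: 'k::field mpoly mat) UNIV J"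
    and "det B \<noteq> 0"
  shows "leading_term (det B) = of_int (sign (w0 q)) * (\<Prod>i = 0..<2*q - 1. B $$ (i, 2*q - 2 - i))"
proof -
  define R where "R = 2*q - 1"
  define n where "n = q*p"
  define x where "x = (\<lambda>i k. int p * int (i+1) + int (pick J k + 1) - int q * int p)"
  define w where "w = w0 q"
  have R0: "R > 0" using assms(2) by (simp add: R_def)
  have cardJ: "card J = R" using assms(4) by (simp add: R_def)
  have finJ: "finite J" using cardJ R0 by (metis card.infinite less_irrefl)
  have dimA: "dim_row (Aprime p q :: 'k mpoly mat) = R" "dim_col (Aprime p q :: 'k mpoly mat) = (q - 1) + (p - 1) * q"
    unfolding Aprime_def R_def by simp_all
  have colset: "{j. j < dim_col (Aprime p q :: 'k mpoly mat) \<and> j \<in> J} = J"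
    using assms(3) dimA(2) by auto
  have rowset: "{i. i < dim_row (Aprime p q :: 'k mpoly mat) \<and> i \<in> UNIV} = {..<R}"
    using dimA(1) by auto
  have dimB: "dim_row B = R" "dim_col B = R"
    unfolding assms(5) dim_submatrix colset rowset cardJ by simp_all
  have Bc: "B \<in> carrier_mat R R" using dimB by auto
  have Bent: "B $$ (i, k) = evar n (x i k)" if "i < R" "k < R" for i k
  proof -
    have pk: "pick J k \<in> J" using pick_in_set_le[of k J] that cardJ by simp
    then have pk2: "pick J k < (q - 1) + (p - 1) * q" using assms(3) by auto
    have "B $$ (i, k) = Aprime p q $$ (pick UNIV i, pick J k)"
      unfolding assms(5) by (rule submatrix_index) (use that in \<open>simp_all only: colset rowset cardJ card_lessThan\<close>)
    also have "\<dots> = evar n (x i k)"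
      using that pk2 by (simp add: pick_UNIV Aprime_def R_def n_def x_def)
    finally show ?thesis .
  qed
  have wR: "\<And>i. w i = (if i < R then R - 1 - i else i)"
    by (simp add: w_def w0_def R_def)
  have w_eq: "w = (\<lambda>i. if i < R then R - 1 - i else i)" using wR by auto
  have wP: "w permutes {0..<R}" unfolding w_eq by (rule w_perm)
  have mono1: "\<And>i j k. i < j \<Longrightarrow> j < R \<Longrightarrow> k < R \<Longrightarrow> x i k < x j k"
    using assms(1) by (simp add: x_def)
  have mono2: "\<And>i k l. i < R \<Longrightarrow> k < l \<Longrightarrow> l < R \<Longrightarrow> x i k < x i l"
  proof -
    fix i k l assume "i < R" "k < l" "l < R"
    then have "pick J k < pick J l" using pick_mono_le[of l J k] cardJ by simp
    then show "x i k < x i l" by (simp add: x_def)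
  qed
  define ok where "ok = (\<lambda>\<sigma>. \<forall>i<R. 0 \<le> x i (\<sigma> i) \<and> x i (\<sigma> i) \<le> int n)"
  define M where "M = (\<lambda>\<sigma>. \<Sum>i\<in>{0..<R}. mon (x i (\<sigma> i)))"
  define P where "P = {\<sigma>. \<sigma> permutes {0..<R}}"
  have finP: "finite P" unfolding P_def by (rule finite_permutations) simp
  have exch: "\<And>\<sigma>. \<sigma> \<in> P \<Longrightarrow> ok \<sigma> \<Longrightarrow> ok w \<and> (\<sigma> = w \<or> grevlex_less (M \<sigma>) (M w))"
    unfolding ok_def M_def P_def using exchange[where x=x and R=R and w=w and n="int n", OF mono1 mono2 wR] by blast
  define T where "T = (\<lambda>\<sigma>. if ok \<sigma> then Poly_Mapping.single (M \<sigma>) (of_int (sign \<sigma>)) else (0::'k mpoly))"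
  have prodP: "(\<Prod>i = 0..<R. B $$ (i, \<sigma> i)) = (if ok \<sigma> then Poly_Mapping.single (M \<sigma>) 1 else 0)"
    if "\<sigma> \<in> P" for \<sigma>
  proof -
    have "(\<Prod>i = 0..<R. B $$ (i, \<sigma> i)) = (\<Prod>i = 0..<R. evar n (x i (\<sigma> i)))"
      using that perm_lt[of \<sigma> R] by (intro prod.cong) (auto simp: P_def Bent)
    also have "\<dots> = (if ok \<sigma> then Poly_Mapping.single (M \<sigma>) 1 else 0)"
      by (auto simp: prod_evar ok_def M_def)
    finally show ?thesis .
  qed
  have detB: "det B = (\<Sum>\<sigma>\<in>P. T \<sigma>)"
  proof -
    have "det B = (\<Sum>\<sigma>\<in>P. signof \<sigma> * (\<Prod>i = 0..<R. B $$ (i, \<sigma> i)))"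
      unfolding P_def by (rule det_def'[OF Bc])
    also have "\<dots> = (\<Sum>\<sigma>\<in>P. T \<sigma>)"
    proof (rule sum.cong[OF refl])
      fix \<sigma> assume "\<sigma> \<in> P"
      then show "signof \<sigma> * (\<Prod>i = 0..<R. B $$ (i, \<sigma> i)) = T \<sigma>"
        by (simp add: prodP T_def mult_single flip: single_of_int)
    qed
    finally show ?thesis .
  qed
  obtain \<sigma>0 where s0: "\<sigma>0 \<in> P" "ok \<sigma>0"
  proof -
    have "\<exists>\<sigma>\<in>P. T \<sigma> \<noteq> 0"
    proof (rule ccontr)
      assume "\<not> ?thesis"
      then have "det B = 0" unfolding detB by simp
      with assms(6) show False by simp
    qed
    then obtain \<sigma> where "\<sigma> \<in> P" "T \<sigma> \<noteq> 0" by blast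
    then show ?thesis using that by (auto simp: T_def split: if_splits)
  qed
  have okw: "ok w" using exch[OF s0] by blast
  have wP': "w \<in> P" using wP by (simp add: P_def)
  have lookT: "Poly_Mapping.lookup (T \<sigma>) (M w) = (if \<sigma> = w then of_int (sign w) else 0)"
    if "\<sigma> \<in> P" for \<sigma>
  proof (cases "ok \<sigma>")
    case True
    show ?thesis
    proof (cases "\<sigma> = w")
      case True then show ?thesis using okw by (simp add: T_def)
    next
      case False
      with exch[OF that \<open>ok \<sigma>\<close>] have "grevlex_less (M \<sigma>) (M w)" by blast
      then have "M \<sigma> \<noteq> M w" using gl_irrefl by metis
      then show ?thesis using False True by (simp add: T_def lookup_single)
    qed
  next
    case False
    then have "\<sigma> \<noteq> w" using okw by blast
    then show ?thesis using False by (simp add: T_def)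
  qed
  have coeff: "Poly_Mapping.lookup (det B) (M w) = of_int (sign w)"
  proof -
    have "Poly_Mapping.lookup (det B) (M w) = (\<Sum>\<sigma>\<in>P. Poly_Mapping.lookup (T \<sigma>) (M w))"
      unfolding detB by (rule lookup_sum)
    also have "\<dots> = (\<Sum>\<sigma>\<in>P. if \<sigma> = w then of_int (sign w) else 0)"
      by (rule sum.cong[OF refl]) (rule lookT)
    also have "\<dots> = of_int (sign w)" using finP wP' by simp
    finally show ?thesis .
  qed
  have signz: "(of_int (sign w) :: 'k) \<noteq> 0"
    by (cases "evenperm w") (simp_all add: sign_def)
  have Mw_keys: "M w \<in> Poly_Mapping.keys (det B)"
    using coeff signz by (simp add: in_keys_iff)
  have keys_sub: "m \<in> Poly_Mapping.keys (det B) \<Longrightarrow> m \<noteq> M w \<Longrightarrow> grevlex_less m (M w)" for m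
  proof -
    assume m: "m \<in> Poly_Mapping.keys (det B)" "m \<noteq> M w"
    then have "(\<Sum>\<sigma>\<in>P. Poly_Mapping.lookup (T \<sigma>) m) \<noteq> 0"
      by (simp add: in_keys_iff detB lookup_sum)
    then obtain \<sigma> where s: "\<sigma> \<in> P" "Poly_Mapping.lookup (T \<sigma>) m \<noteq> 0"
      by (meson sum.neutral)
    then have "ok \<sigma>" "M \<sigma> = m"
      by (auto simp: T_def lookup_single when_def split: if_splits)
    then show ?thesis using exch[OF s(1)] m(2) by auto
  qed
  have LM: "leading_monomial (det B) = M w"
    unfolding leading_monomial_def
  proof (rule the_equality)
    show "M w \<in> Poly_Mapping.keys (det B) \<and> (\<forall>m'\<in>Poly_Mapping.keys (det B). m' \<noteq> M w \<longrightarrow> grevlex_less m' (M w))"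
      using Mw_keys keys_sub by blast
  next
    fix m assume m: "m \<in> Poly_Mapping.keys (det B) \<and> (\<forall>m'\<in>Poly_Mapping.keys (det B). m' \<noteq> m \<longrightarrow> grevlex_less m' m)"
    show "m = M w"
    proof (rule ccontr)
      assume ne: "m \<noteq> M w"
      then have "grevlex_less (M w) m" using m Mw_keys by metis
      moreover have "grevlex_less m (M w)" using keys_sub m ne by blast
      ultimately show False using gl_asym by blast
    qed
  qed
  have LT: "leading_term (det B) = Poly_Mapping.single (M w) (of_int (sign w))"
    unfolding leading_term_def LM coeff ..
  have "(\<Prod>i = 0..<2*q - 1. B $$ (i, 2*q - 2 - i)) = (\<Prod>i = 0..<R. B $$ (i, w i))"
    by (rule prod.cong) (auto simp: R_def wR)
  also have "\<dots> = Poly_Mapping.single (M w) 1" using prodP[OF wP'] okw by simp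
  finally have "of_int (sign (w0 q)) * (\<Prod>i = 0..<2*q - 1. B $$ (i, 2*q - 2 - i)) =
      (of_int (sign w) :: 'k mpoly) * Poly_Mapping.single (M w) 1" by (simp add: w_def)
  also have "\<dots> = Poly_Mapping.single (M w) (of_int (sign w))"
    by (simp add: mult_single flip: single_of_int)
  finally show ?thesis using LT by simp
qed

end
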